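(* Let $f,g:\mathbb{R}^{N}\rightarrow (-\infty ,\infty ]$ be Borel measurable with $m_{f}:=\inf f\in \mathbb{R}$, $m_{g}:=\inf g\in \mathbb{R}$ and $m_{f}+m_{g}\geq 0$. Set $m_{f,g}:=(m_{f}-m_{g})/2$. Then $f-m_{f,g}$, $g+m_{f,g}$ and $f\Box g$ are (Lebesgue) measurable and nonnegative, and $$\|(f-m_{f,g})^{-1}\|_{\phi }+\|(g+m_{f,g})^{-1}\|_{\phi }\leq 4\|(f\Box g)^{-1}\|_{\phi }$$ for every Young function $\phi$.
   Context: The infimal convolution is $(f\Box g)(x):=\inf_{y\in \mathbb{R}^{N}}(f(x-y)+g(y))$. For a function $h\ge 0$, $h^{-1}$ denotes $1/h$ (with $1/0=\infty$, $1/\infty=0$), not a set-theoretic inverse. A Young function is a nonconstant function $\phi:[0,\infty]\to[0,\infty]$ with $\phi(0)=0$ which is nondecreasing, convex and left continuous. For measurable $h$ on $\mathbb{R}^N$, the Luxemburg norm is $\|h\|_{\phi}:=\inf\{r>0:\int_{\mathbb{R}^N}\phi(r^{-1}|h|)\le 1\}$, with the convention $\|h\|_\phi=\infty$ if no such $r$ exists. Measurability means Lebesgue measurability. *)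

theory Defs
  imports "HOL-Analysis.Analysis"
begin

definition inf_conv :: "('a::ab_group_add \<Rightarrow> ereal) \<Rightarrow> ('a \<Rightarrow> ereal) \<Rightarrow> 'a \<Rightarrow> ereal" where
  "inf_conv f g x = (INF y. f (x - y) + g y)"

text \<open>Reciprocal h^{-1} = 1/h of a nonnegative extended-real function, with 1/0 = inf, 1/inf = 0.\<close>
definition recip :: "('a \<Rightarrow> ereal) \<Rightarrow> 'a \<Rightarrow> ennreal" where
  "recip h x = inverse (e2ennreal (h x))"

definition young_function :: "(ennreal \<Rightarrow> ennreal) \<Rightarrow> bool" where
  "young_function \<phi> \<longleftrightarrow>
     (\<exists>a b. \<phi> a \<noteq> \<phi> b) \<and> \<phi> 0 = 0 \<and> mono \<phi> \<and>
     (\<forall>a b t. 0 \<le> t \<and> t \<le> 1 \<longrightarrow>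
        \<phi> (ennreal t * a + ennreal (1 - t) * b) \<le> ennreal t * \<phi> a + ennreal (1 - t) * \<phi> b) \<and>
     (\<forall>x. (\<phi> \<longlongrightarrow> \<phi> x) (at_left x))"

text \<open>Luxemburg norm w.r.t. Lebesgue measure; Inf of the empty set in ennreal is top (= inf).\<close>
definition luxemburg_norm :: "(ennreal \<Rightarrow> ennreal) \<Rightarrow> ('a::euclidean_space \<Rightarrow> ennreal) \<Rightarrow> ennreal" where
  "luxemburg_norm \<phi> h =
     Inf {ennreal r | r. r > 0 \<and> (\<integral>\<^sup>+ x. \<phi> (ennreal (1 / r) * h x) \<partial>lebesgue) \<le> 1}"

end

theory Submission
  imports Defs
begin


lemma hull_exists:
  assumes K: "K \<in> sets M" "emeasure M K < \<infinity>" and AK: "A \<subseteq> K"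
  shows "\<exists>H\<in>sets M. A \<subseteq> H \<and> H \<subseteq> K \<and> (\<forall>N\<in>sets M. A \<subseteq> N \<longrightarrow> H - N \<in> null_sets M)"
proof -
  define F where "F = {measure M X | X. X \<in> sets M \<and> A \<subseteq> X \<and> X \<subseteq> K}"
  define c where "c = Inf F"
  have Kf: "K \<in> fmeasurable M" using K by (simp add: fmeasurable_def)
  have Fne: "F \<noteq> {}" using K AK unfolding F_def by blast
  have Fbdd: "bdd_below F" unfolding F_def by (rule bdd_belowI[of _ 0]) auto
  have "\<exists>X. X \<in> sets M \<and> A \<subseteq> X \<and> X \<subseteq> K \<and> measure M X < c + 1 / Suc n" for n
  proof -
    have "Inf F < c + 1 / Suc n" unfolding c_def by simp
    from cInf_lessD[OF Fne this] show ?thesis unfolding F_def by blast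
  qed
  then obtain X where X: "\<And>n. X n \<in> sets M \<and> A \<subseteq> X n \<and> X n \<subseteq> K \<and> measure M (X n) < c + 1 / Suc n"
    by metis
  define H where "H = (\<Inter>n. X n)"
  have Hs: "H \<in> sets M" unfolding H_def using X by auto
  have AH: "A \<subseteq> H" unfolding H_def using X by auto
  have HK: "H \<subseteq> K" using X[of 0] unfolding H_def by blast
  have Hle: "measure M H \<le> c"
  proof (rule field_le_epsilon)
    fix e :: real assume "e > 0"
    then obtain n where n: "inverse (real (Suc n)) < e" using reals_Archimedean by blast
    have "measure M H \<le> measure M (X n)"
      by (rule measure_mono_fmeasurable[OF _ Hs]) (use X Kf fmeasurableI2[of K M "X n"] in \<open>auto simp: H_def\<close>)
    also have "\<dots> < c + 1 / Suc n" using X by blast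
    finally show "measure M H \<le> c + e" using n by (simp add: inverse_eq_divide)
  qed
  have "H - N \<in> null_sets M" if N: "N \<in> sets M" "A \<subseteq> N" for N
  proof -
    have HNf: "H \<inter> N \<in> fmeasurable M" using fmeasurableI2[of K M "H \<inter> N"] Kf Hs N HK by auto
    have Hf: "H \<in> fmeasurable M" using fmeasurableI2[of K M "H"] Kf Hs HK by auto
    have "H \<inter> N \<in> sets M" using Hs N by auto
    then have "measure M (H \<inter> N) \<in> F" unfolding F_def using AH N HK by blast
    then have "c \<le> measure M (H \<inter> N)" unfolding c_def using Fbdd by (simp add: cInf_lower)
    have "measure M (H - N) = measure M H - measure M (H \<inter> N)"
      using measure_Diff[of M H "H \<inter> N"] Hf HNf fmeasurableD2 by (auto simp: Diff_Int)
    then have "measure M (H - N) \<le> 0" using Hle \<open>c \<le> _\<close> by simp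
    moreover have "H - N \<in> fmeasurable M" using fmeasurableI2[of K M "H - N"] Kf Hs N HK by auto
    ultimately show ?thesis
    proof -
      assume a: "measure M (H - N) \<le> 0" "H - N \<in> fmeasurable M"
      then have "measure M (H - N) = 0" using measure_nonneg[of M "H - N"] by linarith
      then have "emeasure M (H - N) = 0" using emeasure_eq_measure2[OF a(2)] by simp
      then show ?thesis using a(2) by (auto intro: null_setsI)
    qed
  qed
  then show ?thesis using Hs AH HK by blast
qed

lemma map_upt_Suc_Cons: "map \<sigma> [0..<Suc n] = \<sigma> 0 # map (\<lambda>i. \<sigma> (Suc i)) [0..<n]"
  by (simp add: upt_conv_Cons map_Suc_upt[symmetric] del: upt_Suc)

definition suslin :: "(nat list \<Rightarrow> 'b set) \<Rightarrow> 'b set" where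
  "suslin S = {x. \<exists>\<sigma>. \<forall>n. x \<in> S (map \<sigma> [0..<n])}"

lemma suslin_meas_bounded:
  fixes S :: "nat list \<Rightarrow> 'b set"
  assumes compl: "\<And>A B. A \<subseteq> B \<Longrightarrow> B \<in> null_sets M \<Longrightarrow> A \<in> sets M"
  and K: "K \<in> sets M" "emeasure M K < \<infinity>" and S: "\<And>s. S s \<in> sets M" "\<And>s. S s \<subseteq> K"
  shows "suslin S \<in> sets M"
proof -
  define AS where "AS s = {x. \<exists>\<sigma>. \<forall>n. x \<in> S (s @ map \<sigma> [0..<n])}" for s
  have AS_nil: "AS [] = suslin S" by (simp add: AS_def suslin_def)
  have AS_sub: "AS s \<subseteq> S s" for s
  proof
    fix x assume "x \<in> AS s"
    then obtain \<sigma> where "\<forall>n. x \<in> S (s @ map \<sigma> [0..<n])" by (auto simp: AS_def)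
    from this[rule_format, of 0] show "x \<in> S s" by simp
  qed
  have AS_split: "AS s \<subseteq> (\<Union>k. AS (s @ [k]))" for s
  proof
    fix x assume "x \<in> AS s"
    then obtain \<sigma> where sg: "\<forall>n. x \<in> S (s @ map \<sigma> [0..<n])" by (auto simp: AS_def)
    have "\<forall>n. x \<in> S ((s @ [\<sigma> 0]) @ map (\<lambda>i. \<sigma> (Suc i)) [0..<n])"
    proof
      fix n show "x \<in> S ((s @ [\<sigma> 0]) @ map (\<lambda>i. \<sigma> (Suc i)) [0..<n])"
        using sg[rule_format, of "Suc n"] by (simp only: map_upt_Suc_Cons append_Cons append_assoc append.simps)
    qed
    then show "x \<in> (\<Union>k. AS (s @ [k]))" unfolding AS_def by blast
  qed
  have "\<forall>s. \<exists>H\<in>sets M. AS s \<subseteq> H \<and> H \<subseteq> K \<and> (\<forall>N\<in>sets M. AS s \<subseteq> N \<longrightarrow> H - N \<in> null_sets M)"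
  proof
    fix s show "\<exists>H\<in>sets M. AS s \<subseteq> H \<and> H \<subseteq> K \<and> (\<forall>N\<in>sets M. AS s \<subseteq> N \<longrightarrow> H - N \<in> null_sets M)"
      using hull_exists[OF K, of "AS s"] AS_sub[of s] S(2)[of s] by blast
  qed
  then have "\<exists>H. \<forall>s. H s \<in> sets M \<and> AS s \<subseteq> H s \<and> H s \<subseteq> K \<and> (\<forall>N\<in>sets M. AS s \<subseteq> N \<longrightarrow> H s - N \<in> null_sets M)"
    unfolding Bex_def by (rule choice)
  then obtain H where H0: "\<forall>s. H s \<in> sets M \<and> AS s \<subseteq> H s \<and> H s \<subseteq> K \<and> (\<forall>N\<in>sets M. AS s \<subseteq> N \<longrightarrow> H s - N \<in> null_sets M)"
    by blast
  have H: "\<And>s. H s \<in> sets M" "\<And>s. AS s \<subseteq> H s"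
     "\<And>s N. N \<in> sets M \<Longrightarrow> AS s \<subseteq> N \<Longrightarrow> H s - N \<in> null_sets M"
    using H0 by blast+
  define H' where "H' s = H s \<inter> S s" for s
  have H's: "H' s \<in> sets M" for s using H S by (auto simp: H'_def)
  have AH': "AS s \<subseteq> H' s" for s using H AS_sub by (auto simp: H'_def)
  have H'S: "H' s \<subseteq> S s" for s by (auto simp: H'_def)
  define D where "D s = H' s - (\<Union>k. H' (s @ [k]))" for s
  have Dnull: "D s \<in> null_sets M" for s
  proof -
    have U: "(\<Union>k. H' (s @ [k])) \<in> sets M" using H's by auto
    have "AS s \<subseteq> (\<Union>k. H' (s @ [k]))" using AS_split AH' by blast
    then have "H s - (\<Union>k. H' (s @ [k])) \<in> null_sets M" using H(3) U by blast
    moreover have "D s \<subseteq> H s - (\<Union>k. H' (s @ [k]))" by (auto simp: D_def H'_def)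
    moreover have "D s \<in> sets M" using H's U by (auto simp: D_def)
    ultimately show ?thesis using null_sets_subset by blast
  qed
  define Nall where "Nall = (\<Union>s. D s)"
  have Nnull: "Nall \<in> null_sets M" unfolding Nall_def
    by (rule null_sets_UN') (auto intro: Dnull)
  have key: "H' [] - suslin S \<subseteq> Nall"
  proof
    fix x assume x: "x \<in> H' [] - suslin S"
    show "x \<in> Nall"
    proof (rule ccontr)
      assume nx: "x \<notin> Nall"
      define kf where "kf s = (SOME k. x \<in> H' (s @ [k]))" for s
      define pre where "pre = rec_nat [] (\<lambda>n p. p @ [kf p])"
      have pre0: "pre 0 = []" and preS: "\<And>n. pre (Suc n) = pre n @ [kf (pre n)]"
        by (simp_all add: pre_def)
      have inH: "x \<in> H' (pre n)" for n
      proof (induction n)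
        case 0 then show ?case using x pre0 by simp
      next
        case (Suc n)
        have "x \<notin> D (pre n)" using nx by (auto simp: Nall_def)
        then obtain k where "x \<in> H' (pre n @ [k])" using Suc by (auto simp: D_def)
        then have "x \<in> H' (pre n @ [kf (pre n)])" unfolding kf_def by (rule someI)
        then show ?case by (simp add: preS)
      qed
      define \<sigma> where "\<sigma> i = kf (pre i)" for i
      have pm: "pre n = map \<sigma> [0..<n]" for n
        by (induction n) (simp_all add: pre0 preS \<sigma>_def)
      have "\<forall>n. x \<in> S (map \<sigma> [0..<n])" 
      proof
        fix n show "x \<in> S (map \<sigma> [0..<n])" using inH[of n] H'S[of "pre n"] pm[of n] by auto
      qed
      then have "x \<in> suslin S" by (auto simp: suslin_def)
      then show False using x by simp
    qed
  qed
  have sub: "suslin S \<subseteq> H' []" using AH'[of "[]"] AS_nil by simp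
  have "H' [] - suslin S \<in> sets M" using compl[OF key Nnull] .
  then have "H' [] - (H' [] - suslin S) \<in> sets M" using H's by auto
  moreover have "H' [] - (H' [] - suslin S) = suslin S" using sub by blast
  ultimately show ?thesis by simp
qed

lemma suslin_Int: "suslin (\<lambda>s. S s \<inter> K) = suslin S \<inter> K"
proof -
  have "x \<in> K" if "\<forall>n. x \<in> S (map \<sigma> [0..<n]) \<inter> K" for x \<sigma> using that[rule_format, of 0] by simp
  then show ?thesis unfolding suslin_def by blast
qed

lemma suslin_lebesgue:
  fixes S :: "nat list \<Rightarrow> 'b::euclidean_space set"
  assumes S: "\<And>s. S s \<in> sets lebesgue"
  shows "suslin S \<in> sets lebesgue"
proof -
  have "suslin (\<lambda>s. S s \<inter> cball 0 (real r)) \<in> sets lebesgue" for r :: nat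
  proof (rule suslin_meas_bounded[where K="cball 0 (real r)"])
    show "A \<in> sets lebesgue" if "A \<subseteq> B" "B \<in> null_sets lebesgue" for A B
      using completion.complete2[OF that] by auto
    show "cball 0 (real r) \<in> sets lebesgue" by simp
    show "emeasure lebesgue (cball (0::'b) (real r)) < \<infinity>"
      using lmeasurable_cball[of "0::'b" "real r"] by (simp add: fmeasurable_def)
  qed (use S in auto)
  then have "\<And>r::nat. suslin S \<inter> cball 0 (real r) \<in> sets lebesgue"
    by (simp add: suslin_Int)
  then have "(\<Union>r::nat. suslin S \<inter> cball 0 (real r)) \<in> sets lebesgue"
    by (intro sets.countable_UN) auto
  moreover have "(\<Union>r::nat. suslin S \<inter> cball 0 (real r)) = suslin S"
  proof -
    have "\<exists>r::nat. norm x \<le> real r" for x :: 'b by (rule real_arch_simple)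
    then show ?thesis by (auto simp: dist_norm)
  qed
  ultimately show ?thesis by simp
qed

definition SusC :: "'b::topological_space set set" where
  "SusC = {suslin S | S. \<forall>s. closed (S s)}"

lemma SusC_closed: "closed C \<Longrightarrow> C \<in> SusC"
  unfolding SusC_def
  by (rule CollectI, rule exI[of _ "\<lambda>_. C"]) (auto simp: suslin_def)

lemma SusC_UN:
  assumes "\<And>i::nat. B i \<in> SusC"
  shows "(\<Union>i. B i) \<in> SusC"
proof -
  have "\<forall>i. \<exists>S. B i = suslin S \<and> (\<forall>s. closed (S s))" using assms unfolding SusC_def by blast
  then obtain SS where SS: "\<And>i. B i = suslin (SS i)" "\<And>i s. closed (SS i s)" by metis
  define S' where "S' s = (case s of [] \<Rightarrow> UNIV | i # t \<Rightarrow> SS i t)" for s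
  have cl: "closed (S' s)" for s by (cases s) (auto simp: S'_def SS)
  have "suslin S' = (\<Union>i. suslin (SS i))"
  proof
    show "suslin S' \<subseteq> (\<Union>i. suslin (SS i))"
    proof
      fix x assume "x \<in> suslin S'"
      then obtain \<sigma> where sg: "\<forall>n. x \<in> S' (map \<sigma> [0..<n])" by (auto simp: suslin_def)
      have "\<forall>m. x \<in> SS (\<sigma> 0) (map (\<lambda>i. \<sigma> (Suc i)) [0..<m])"
      proof
        fix m show "x \<in> SS (\<sigma> 0) (map (\<lambda>i. \<sigma> (Suc i)) [0..<m])"
          using sg[rule_format, of "Suc m"] by (simp only: map_upt_Suc_Cons) (simp add: S'_def)
      qed
      then show "x \<in> (\<Union>i. suslin (SS i))" by (auto simp: suslin_def)
    qed
    show "(\<Union>i. suslin (SS i)) \<subseteq> suslin S'"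
    proof
      fix x assume "x \<in> (\<Union>i. suslin (SS i))"
      then obtain i \<tau> where tg: "\<forall>m. x \<in> SS i (map \<tau> [0..<m])" by (auto simp: suslin_def)
      define \<sigma> where "\<sigma> = case_nat i \<tau>"
      have "\<forall>n. x \<in> S' (map \<sigma> [0..<n])"
      proof
        fix n show "x \<in> S' (map \<sigma> [0..<n])"
        proof (cases n)
          case 0 then show ?thesis by (simp add: S'_def)
        next
          case (Suc m)
          then show ?thesis using tg[rule_format, of m]
            by (simp only: map_upt_Suc_Cons) (simp add: S'_def \<sigma>_def)
        qed
      qed
      then show "x \<in> suslin S'" by (auto simp: suslin_def)
    qed
  qed
  then show ?thesis using cl SS unfolding SusC_def by auto
qed

lemma prod_encode_mono2: "j < m \<Longrightarrow> prod_encode (i, j) < prod_encode (i, m)"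
proof -
  have "triangle a < triangle b" if "a < b" for a b
    using that by (induction b) (auto simp: less_Suc_eq)
  then show "j < m \<Longrightarrow> ?thesis" by (simp add: prod_encode_def)
qed

lemma SusC_INT:
  assumes "\<And>i::nat. B i \<in> SusC"
  shows "(\<Inter>i. B i) \<in> SusC"
proof -
  have "\<forall>i. \<exists>S. B i = suslin S \<and> (\<forall>s. closed (S s))" using assms unfolding SusC_def by blast
  then obtain SS where SS: "\<And>i. B i = suslin (SS i)" "\<And>i s. closed (SS i s)" by metis
  define S' where "S' s = \<Inter>{SS i (map (\<lambda>j. s ! prod_encode (i, j)) [0..<m]) | i m. \<forall>j<m. prod_encode (i, j) < length s}" for s
  have cl: "closed (S' s)" for s unfolding S'_def by (rule closed_Inter) (auto simp: SS)
  have "suslin S' = (\<Inter>i. suslin (SS i))"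
  proof
    show "suslin S' \<subseteq> (\<Inter>i. suslin (SS i))"
    proof
      fix x assume "x \<in> suslin S'"
      then obtain \<sigma> where sg: "\<forall>n. x \<in> S' (map \<sigma> [0..<n])" by (auto simp: suslin_def)
      show "x \<in> (\<Inter>i. suslin (SS i))"
      proof
        fix i assume "i \<in> (UNIV::nat set)"
        define \<tau> where "\<tau> j = \<sigma> (prod_encode (i, j))" for j
        have "\<forall>m. x \<in> SS i (map \<tau> [0..<m])"
        proof
          fix m
          define s where "s = map \<sigma> [0..<prod_encode (i, m)]"
          have lt: "\<forall>j<m. prod_encode (i, j) < length s" by (simp add: s_def prod_encode_mono2)
          have "x \<in> S' s" using sg s_def by blast
          then have "x \<in> SS i (map (\<lambda>j. s ! prod_encode (i, j)) [0..<m])"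
            using lt unfolding S'_def by blast
          moreover have "map (\<lambda>j. s ! prod_encode (i, j)) [0..<m] = map \<tau> [0..<m]"
            by (rule map_cong) (auto simp: s_def \<tau>_def prod_encode_mono2)
          ultimately show "x \<in> SS i (map \<tau> [0..<m])" by simp
        qed
        then show "x \<in> suslin (SS i)" by (auto simp: suslin_def)
      qed
    qed
    show "(\<Inter>i. suslin (SS i)) \<subseteq> suslin S'"
    proof
      fix x assume "x \<in> (\<Inter>i. suslin (SS i))"
      then have "\<forall>i. \<exists>\<tau>. \<forall>m. x \<in> SS i (map \<tau> [0..<m])" by (auto simp: suslin_def)
      then obtain \<tau> where tg: "\<And>i m. x \<in> SS i (map (\<tau> i) [0..<m])" by metis
      define \<sigma> where "\<sigma> p = (case prod_decode p of (i, j) \<Rightarrow> \<tau> i j)" for p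
      have "\<forall>n. x \<in> S' (map \<sigma> [0..<n])"
      proof
        fix n
        show "x \<in> S' (map \<sigma> [0..<n])"
          unfolding S'_def
        proof (rule InterI)
          fix X assume "X \<in> {SS i (map (\<lambda>j. map \<sigma> [0..<n] ! prod_encode (i, j)) [0..<m]) | i m. \<forall>j<m. prod_encode (i, j) < length (map \<sigma> [0..<n])}"
          then obtain i m where X: "X = SS i (map (\<lambda>j. map \<sigma> [0..<n] ! prod_encode (i, j)) [0..<m])"
            and lt: "\<forall>j<m. prod_encode (i, j) < n" by auto
          have eq: "map (\<lambda>j. map \<sigma> [0..<n] ! prod_encode (i, j)) [0..<m] = map (\<tau> i) [0..<m]"
            by (rule map_cong) (auto simp: lt \<sigma>_def)
          show "x \<in> X" using tg[of i m] by (simp only: X eq)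
        qed
      qed
      then show "x \<in> suslin S'" by (auto simp: suslin_def)
    qed
  qed
  then show ?thesis using cl SS unfolding SusC_def by auto
qed

lemma SusC_open:
  fixes U :: "'b::metric_space set"
  assumes "open U"
  shows "U \<in> SusC"
proof (cases "U = UNIV")
  case True then show ?thesis by (simp add: SusC_closed)
next
  case False
  then have ne: "- U \<noteq> {}" by auto
  have cU: "closed (- U)" using assms by auto
  have "U = (\<Union>n::nat. {x. inverse (real (Suc n)) \<le> infdist x (- U)})"
  proof safe
    fix x assume "x \<in> U"
    then have "x \<notin> closure (- U)" using cU by simp
    then have "infdist x (- U) \<noteq> 0" using in_closure_iff_infdist_zero[OF ne] by simp
    then have "infdist x (- U) > 0" using infdist_nonneg[of x "- U"] by linarith
    then obtain n where "inverse (real (Suc n)) < infdist x (- U)" using reals_Archimedean by blast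
    then show "x \<in> (\<Union>n::nat. {x. inverse (real (Suc n)) \<le> infdist x (- U)})" by (auto intro: less_imp_le)
  next
    fix x n assume "inverse (real (Suc n)) \<le> infdist x (- U)"
    then have "infdist x (- U) \<noteq> 0" by (metis inverse_positive_iff_positive of_nat_0_less_iff zero_less_Suc not_le order_refl)
    then show "x \<in> U" by (metis ComplI infdist_zero)
  qed
  moreover have "{x. inverse (real (Suc n)) \<le> infdist x (- U)} \<in> SusC" for n :: nat
    by (rule SusC_closed, rule closed_Collect_le) (auto intro!: continuous_intros)
  ultimately show ?thesis by (metis SusC_UN)
qed

lemma borel_SusC:
  fixes B :: "'b::metric_space set"
  assumes "B \<in> sets borel"
  shows "B \<in> SusC"
proof -
  have "B \<in> sigma_sets UNIV {S. open S}" using assms by (simp add: sets_borel)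
  then have "B \<in> SusC \<and> - B \<in> SusC"
  proof (induction rule: sigma_sets.induct)
    case (Basic a) then show ?case by (auto intro: SusC_open SusC_closed)
  next
    case Empty then show ?case by (auto intro: SusC_closed)
  next
    case (Compl a) then show ?case by (simp add: Compl_eq_Diff_UNIV[symmetric])
  next
    case (Union a)
    then have "(\<Union>i. a i) \<in> SusC" by (auto intro: SusC_UN)
    moreover have "- (\<Union>i. a i) = (\<Inter>i. - a i)" by auto
    moreover have "(\<Inter>i. - a i) \<in> SusC" using Union by (auto intro: SusC_INT)
    ultimately show ?case by simp
  qed
  then show ?thesis by simp
qed




lemma take_map_upt: "k \<le> n \<Longrightarrow> take k (map \<tau> [0..<n]) = map \<tau> [0..<k]"
  by (simp add: take_map take_upt min_def)

lemma proj_SusC_lebesgue: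
  fixes A :: "('a::euclidean_space \<times> 'c::euclidean_space) set"
  assumes "A \<in> SusC"
  shows "fst ` A \<in> sets lebesgue"
proof -
  obtain S where A: "A = suslin S" and Scl: "\<And>s. closed (S s)" using assms unfolding SusC_def by blast
  define T where "T s = (case s of [] \<Rightarrow> UNIV | m # t \<Rightarrow> cball 0 (real m) \<inter> \<Inter>{S (take k t) | k. k \<le> length t})" for s
  have Tcomp: "compact (T (m # t))" for m t
    unfolding T_def by (auto intro!: compact_Int_closed closed_Inter simp: Scl)
  have Tnil: "T [] = UNIV" by (simp add: T_def)
  have Tmono: "T (map \<sigma> [0..<Suc (Suc n)]) \<subseteq> T (map \<sigma> [0..<Suc n])" for \<sigma> n
  proof -
    have e1: "T (map \<sigma> [0..<Suc (Suc n)]) = cball 0 (real (\<sigma> 0)) \<inter> \<Inter>{S (take k (map (\<lambda>i. \<sigma> (Suc i)) [0..<Suc n])) | k. k \<le> Suc n}"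
      by (simp only: map_upt_Suc_Cons[of _ "Suc n"]) (simp add: T_def)
    have e2: "T (map \<sigma> [0..<Suc n]) = cball 0 (real (\<sigma> 0)) \<inter> \<Inter>{S (take k (map (\<lambda>i. \<sigma> (Suc i)) [0..<n])) | k. k \<le> n}"
      by (simp only: map_upt_Suc_Cons[of _ n]) (simp add: T_def)
    have sub: "\<Inter>{S (take k (map (\<lambda>i. \<sigma> (Suc i)) [0..<Suc n])) | k. k \<le> Suc n} \<subseteq> \<Inter>{S (take k (map (\<lambda>i. \<sigma> (Suc i)) [0..<n])) | k. k \<le> n}"
    proof
      fix x assume x: "x \<in> \<Inter>{S (take k (map (\<lambda>i. \<sigma> (Suc i)) [0..<Suc n])) | k. k \<le> Suc n}"
      show "x \<in> \<Inter>{S (take k (map (\<lambda>i. \<sigma> (Suc i)) [0..<n])) | k. k \<le> n}"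
      proof
        fix X assume "X \<in> {S (take k (map (\<lambda>i. \<sigma> (Suc i)) [0..<n])) | k. k \<le> n}"
        then obtain k where k: "k \<le> n" "X = S (take k (map (\<lambda>i. \<sigma> (Suc i)) [0..<n]))" by blast
        have "S (take k (map (\<lambda>i. \<sigma> (Suc i)) [0..<Suc n])) \<in> {S (take k (map (\<lambda>i. \<sigma> (Suc i)) [0..<Suc n])) | k. k \<le> Suc n}"
          using k(1) le_SucI by blast
        then have "x \<in> S (take k (map (\<lambda>i. \<sigma> (Suc i)) [0..<Suc n]))" using x by (rule InterD[rotated])
        then show "x \<in> X" using k by (simp add: take_map_upt)
      qed
    qed
    show ?thesis unfolding e1 e2 using sub by blast
  qed
  have eqA: "suslin T = suslin S"
  proof
    show "suslin T \<subseteq> suslin S"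
    proof
      fix x assume "x \<in> suslin T"
      then obtain \<sigma> where sg: "\<forall>n. x \<in> T (map \<sigma> [0..<n])" by (auto simp: suslin_def)
      have "\<forall>n. x \<in> S (map (\<lambda>i. \<sigma> (Suc i)) [0..<n])"
      proof
        fix n
        have "x \<in> T (map \<sigma> [0..<Suc n])" using sg by blast
        then have "x \<in> \<Inter>{S (take k (map (\<lambda>i. \<sigma> (Suc i)) [0..<n])) | k. k \<le> n}"
          by (simp only: map_upt_Suc_Cons) (simp add: T_def)
        then have "x \<in> S (take n (map (\<lambda>i. \<sigma> (Suc i)) [0..<n]))" by blast
        then show "x \<in> S (map (\<lambda>i. \<sigma> (Suc i)) [0..<n])" by simp
      qed
      then show "x \<in> suslin S" by (auto simp: suslin_def)
    qed
    show "suslin S \<subseteq> suslin T"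
    proof
      fix x assume "x \<in> suslin S"
      then obtain \<tau> where tg: "\<forall>n. x \<in> S (map \<tau> [0..<n])" by (auto simp: suslin_def)
      obtain m :: nat where m: "norm x \<le> real m" using real_arch_simple by blast
      define \<sigma> where "\<sigma> = case_nat m \<tau>"
      have "\<forall>n. x \<in> T (map \<sigma> [0..<n])"
      proof
        fix n show "x \<in> T (map \<sigma> [0..<n])"
        proof (cases n)
          case 0 then show ?thesis by (simp add: Tnil)
        next
          case (Suc n')
          have "x \<in> \<Inter>{S (take k (map \<tau> [0..<n'])) | k. k \<le> n'}"
            using tg by (auto simp: take_map_upt)
          then have "x \<in> T (m # map \<tau> [0..<n'])" using m by (simp add: T_def dist_norm)
          then show ?thesis using Suc by (simp only: map_upt_Suc_Cons) (simp add: \<sigma>_def)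
        qed
      qed
      then show "x \<in> suslin T" by (auto simp: suslin_def)
    qed
  qed
  have proj: "fst ` suslin T = suslin (\<lambda>s. fst ` T s)"
  proof
    show "fst ` suslin T \<subseteq> suslin (\<lambda>s. fst ` T s)" by (auto simp: suslin_def)
    show "suslin (\<lambda>s. fst ` T s) \<subseteq> fst ` suslin T"
    proof
      fix x assume "x \<in> suslin (\<lambda>s. fst ` T s)"
      then obtain \<sigma> where sg: "\<forall>n. x \<in> fst ` T (map \<sigma> [0..<n])" by (auto simp: suslin_def)
      define F where "F n = T (map \<sigma> [0..<Suc n]) \<inter> {p. fst p = x}" for n
      have Fc: "compact (F n)" for n
      proof -
        have "compact (T (map \<sigma> [0..<Suc n]))" by (simp only: map_upt_Suc_Cons Tcomp)
        moreover have "closed {p::'a \<times> 'c. fst p = x}"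
          by (rule closed_Collect_eq) (auto intro!: continuous_intros)
        ultimately show ?thesis unfolding F_def by (rule compact_Int_closed)
      qed
      have Fne: "F n \<noteq> {}" for n using sg[rule_format, of "Suc n"] by (auto simp: F_def)
      have "decseq F"
      proof (rule decseq_SucI)
        fix n show "F (Suc n) \<subseteq> F n" unfolding F_def using Tmono[of \<sigma> n] by blast
      qed
      then have Fmono: "m \<le> n \<Longrightarrow> F n \<subseteq> F m" for m n by (simp add: decseq_def)
      have "\<Inter>(range F) \<noteq> {}" by (rule compact_nest[OF Fc Fne Fmono])
      then obtain p where p: "p \<in> \<Inter>(range F)" by (meson all_not_in_conv)
      have "\<forall>n. p \<in> T (map \<sigma> [0..<n])"
      proof
        fix n show "p \<in> T (map \<sigma> [0..<n])"
        proof (cases n)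
          case 0 then show ?thesis by (simp add: Tnil)
        next
          case (Suc m)
          have "p \<in> F m" using p by blast
          then show ?thesis unfolding F_def Suc by blast
        qed
      qed
      then have "p \<in> suslin T" by (auto simp: suslin_def)
      moreover have "fst p = x" using p by (auto simp: F_def)
      ultimately show "x \<in> fst ` suslin T" by force
    qed
  qed
  have "fst ` T s \<in> sets lebesgue" for s
  proof (cases s)
    case Nil then show ?thesis by (simp add: Tnil)
  next
    case (Cons m t)
    have "compact (fst ` T s)" using Tcomp Cons
      by (intro compact_continuous_image) (auto intro!: continuous_intros)
    then have "fst ` T s \<in> sets borel" by (auto intro: borel_closed compact_imp_closed)
    then show ?thesis by auto
  qed
  then have "suslin (\<lambda>s. fst ` T s) \<in> sets lebesgue" by (rule suslin_lebesgue)
  then show ?thesis using proj eqA A by simp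
qed



lemma mono_ennreal_borel:
  fixes \<phi> :: "ennreal \<Rightarrow> ennreal"
  assumes "mono \<phi>"
  shows "\<phi> \<in> borel_measurable borel"
proof (rule borel_measurableI_less)
  fix a
  define D where "D = {x. \<phi> x < a}"
  have dc: "z \<in> D" if "x \<in> D" "z \<le> x" for x z
    using that assms by (auto simp: D_def mono_def intro: le_less_trans)
  define s where "s = Sup D"
  have "D \<in> sets borel"
  proof (cases "s \<in> D")
    case True
    then have "D = {..s}" using dc by (auto simp: s_def intro: Sup_upper)
    then show ?thesis by simp
  next
    case False
    have "D = {..<s}"
    proof safe
      fix z assume "z \<in> D" then show "z < s" using False Sup_upper[of z D] s_def
        by (metis order.not_eq_order_implies_strict)
    next
      fix z assume "z < s" then obtain x where "x \<in> D" "z < x" using less_Sup_iff[of z D] s_def by auto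
      then show "z \<in> D" using dc by auto
    qed
    then show ?thesis by simp
  qed
  moreover have "{x \<in> space borel. \<phi> x < a} = D" unfolding D_def by auto
  ultimately show "{x \<in> space borel. \<phi> x < a} \<in> sets borel" by (simp only:)
qed

lemma lux_le:
  assumes "\<And>r. 0 < r \<Longrightarrow> t < ennreal r \<Longrightarrow> (\<integral>\<^sup>+x. \<phi> (ennreal (1/r) * w x) \<partial>lebesgue) \<le> 1"
  shows "luxemburg_norm \<phi> w \<le> t"
proof (rule ennreal_le_epsilon)
  fix e :: real assume t: "t < top" and e: "0 < e"
  define r where "r = enn2real t + e"
  have r0: "0 < r" using e enn2real_nonneg[of t] unfolding r_def by linarith
  have "ennreal r = ennreal (enn2real t) + ennreal e" unfolding r_def
    by (rule ennreal_plus) (use e in auto)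
  then have rt: "ennreal r = t + ennreal e" using t by simp
  have "t < ennreal r" using t e rt by (simp add: ennreal_add_left_cancel_less)
  then have "ennreal r \<in> {ennreal r | r. r > 0 \<and> (\<integral>\<^sup>+ x. \<phi> (ennreal (1 / r) * w x) \<partial>lebesgue) \<le> 1}"
    using assms r0 by blast
  then have "luxemburg_norm \<phi> w \<le> ennreal r" unfolding luxemburg_norm_def by (rule Inf_lower)
  then show "luxemburg_norm \<phi> w \<le> t + ennreal e" using rt by simp
qed

lemma lux_less:
  assumes "luxemburg_norm \<phi> w < ennreal r"
  shows "\<exists>r0>0. r0 < r \<and> (\<integral>\<^sup>+x. \<phi> (ennreal (1/r0) * w x) \<partial>lebesgue) \<le> 1"
proof -
  from assms obtain r0 where r0: "r0 > 0" "(\<integral>\<^sup>+ x. \<phi> (ennreal (1 / r0) * w x) \<partial>lebesgue) \<le> 1"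
    "ennreal r0 < ennreal r"
    unfolding luxemburg_norm_def Inf_less_iff by blast
  then have "r0 < r" using ennreal_less_iff[of r0 r] by simp
  then show ?thesis using r0 by blast
qed

lemma young_mono: "young_function \<phi> \<Longrightarrow> mono \<phi>" by (simp add: young_function_def)

lemma young_sup:
  assumes y: "young_function \<phi>" and inc: "incseq a"
  shows "\<phi> (SUP n. a n) = (SUP n. \<phi> (a n))"
proof -
  have mono: "mono \<phi>" using y by (simp add: young_function_def)
  have lc: "(\<phi> \<longlongrightarrow> \<phi> x) (at_left x)" for x using y by (simp add: young_function_def)
  define s where "s = (SUP n. a n)"
  have incp: "incseq (\<lambda>n. \<phi> (a n))" using inc mono by (simp add: incseq_def mono_def)
  show ?thesis
  proof (cases "\<exists>n. a n = s")
    case True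
    then obtain n where n: "a n = s" by blast
    have "\<phi> (a m) \<le> \<phi> s" for m using mono by (simp add: mono_def s_def SUP_upper)
    then have "(SUP m. \<phi> (a m)) \<le> \<phi> s" by (rule SUP_least)
    moreover have "\<phi> (a n) \<le> (SUP m. \<phi> (a m))" by (rule SUP_upper) simp
    ultimately show ?thesis using n s_def by (simp add: antisym)
  next
    case False
    have lim: "a \<longlonglongrightarrow> s" unfolding s_def by (rule LIMSEQ_SUP[OF inc])
    have "a n < s" for n
    proof -
      have "a n \<le> s" unfolding s_def by (rule SUP_upper) simp
      then show ?thesis using False by (simp add: order.not_eq_order_implies_strict)
    qed
    then have "filterlim a (at_left s) sequentially"
      by (intro tendsto_imp_filterlim_at_left[OF lim]) auto
    then have "(\<lambda>n. \<phi> (a n)) \<longlonglongrightarrow> \<phi> s" by (rule filterlim_compose[OF lc])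
    moreover have "(\<lambda>n. \<phi> (a n)) \<longlonglongrightarrow> (SUP n. \<phi> (a n))" by (rule LIMSEQ_SUP[OF incp])
    ultimately show ?thesis using LIMSEQ_unique s_def by blast
  qed
qed

lemma lebesgue_translate_nn:
  fixes k :: "'a::euclidean_space \<Rightarrow> ennreal"
  assumes k: "k \<in> borel_measurable lebesgue"
  shows "(\<integral>\<^sup>+x. k (x + y) \<partial>lebesgue) = (\<integral>\<^sup>+x. k x \<partial>lebesgue)"
proof -
  define T where "T = (\<lambda>x::'a. y + (\<Sum>j\<in>Basis. (1 * (x \<bullet> j)) *\<^sub>R j))"
  have T: "T = (\<lambda>x. y + x)" by (simp add: T_def euclidean_representation)
  have L: "lebesgue = density (distr lebesgue lebesgue T) (\<lambda>_. (\<Prod>j\<in>(Basis::'a set). \<bar>1::real\<bar>))"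
    unfolding T_def by (rule lebesgue_affine_euclidean) simp
  have Tm: "T \<in> lebesgue \<rightarrow>\<^sub>M lebesgue"
    unfolding T_def by (rule lebesgue_affine_measurable) simp
  have "(\<integral>\<^sup>+x. k x \<partial>lebesgue) = (\<integral>\<^sup>+x. k x \<partial>distr lebesgue lebesgue T)"
    using L by (simp add: density_1)
  also have "\<dots> = (\<integral>\<^sup>+x. k (T x) \<partial>lebesgue)"
  proof (rule nn_integral_distr[OF Tm])
    have "measurable (distr lebesgue lebesgue T) borel = measurable lebesgue borel"
      by (rule measurable_cong_sets) auto
    then show "k \<in> borel_measurable (distr lebesgue lebesgue T)" using k by simp
  qed
  finally show ?thesis by (simp add: T add.commute)
qed

lemma ennreal_inverse_antimono:
  assumes "a \<le> b" shows "inverse b \<le> inverse (a::ennreal)"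
proof (cases "b = top")
  case True then show ?thesis by simp
next
  case False
  then obtain y where y: "b = ennreal y" "0 \<le> y" by (cases b rule: ennreal_cases) auto
  then obtain x where x: "a = ennreal x" "0 \<le> x" "x \<le> y" using assms
    by (cases a rule: ennreal_cases) (auto simp: ennreal_le_iff top_unique)
  show ?thesis
  proof (cases "x = 0")
    case True then show ?thesis using x by simp
  next
    case False
    then have "0 < x" "0 < y" using x by auto
    then show ?thesis using x y by (simp add: inverse_ennreal ennreal_leI le_imp_inverse_le)
  qed
qed

lemma inverse_SUP_eps:
  fixes a :: ennreal
  shows "inverse a = (SUP n. inverse (a + ennreal (inverse (real (Suc n)))))"
proof -
  define b where "b n = inverse (a + ennreal (inverse (real (Suc n))))" for n
  have inc: "incseq b" unfolding b_def
    by (rule incseq_SucI, rule ennreal_inverse_antimono, rule add_left_mono, rule ennreal_leI)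
       (simp add: field_simps)
  have "(\<lambda>n. a + ennreal (inverse (real (Suc n)))) \<longlonglongrightarrow> a + ennreal 0"
    by (intro tendsto_intros LIMSEQ_inverse_real_of_nat)
  then have l: "(\<lambda>n. a + ennreal (inverse (real (Suc n)))) \<longlonglongrightarrow> a" by simp
  have c: "continuous_on UNIV (inverse :: ennreal \<Rightarrow> ennreal)"
    using continuous_on_inverse_ennreal[OF continuous_on_id] by simp
  have "b \<longlonglongrightarrow> inverse a"
    unfolding b_def using continuous_on_tendsto_compose[OF c l] by (simp add: o_def)
  moreover have "b \<longlonglongrightarrow> (SUP n. b n)" by (rule LIMSEQ_SUP[OF inc])
  ultimately show ?thesis using LIMSEQ_unique unfolding b_def by blast
qed

lemma key_ineq:
  fixes u h :: "'a::euclidean_space \<Rightarrow> ereal"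
  assumes y: "young_function \<phi>"
    and um: "u \<in> borel_measurable lebesgue" and u0: "\<And>z. 0 \<le> u z"
    and hm: "h \<in> borel_measurable lebesgue"
    and appr: "\<And>e. 0 < e \<Longrightarrow> \<exists>y. \<forall>z. h (z + y) \<le> 2 * u z + ereal e"
  shows "luxemburg_norm \<phi> (recip u) \<le> 2 * luxemburg_norm \<phi> (recip h)"
proof (rule lux_le)
  define L where "L = luxemburg_norm \<phi> (recip h)"
  fix r :: real assume r: "0 < r" "2 * luxemburg_norm \<phi> (recip h) < ennreal r"
  define \<rho> where "\<rho> = r / 2"
  have rho0: "0 < \<rho>" using r by (simp add: \<rho>_def)
  have "ennreal (2 * \<rho>) = ennreal 2 * ennreal \<rho>" by (rule ennreal_mult) (use rho0 in auto)
  then have r2: "ennreal r = 2 * ennreal \<rho>" by (simp add: \<rho>_def)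
  have "L < ennreal \<rho>"
  proof (rule ccontr)
    assume "\<not> L < ennreal \<rho>"
    then have "ennreal \<rho> \<le> L" by simp
    then have "2 * ennreal \<rho> \<le> 2 * L" by (rule mult_left_mono) simp
    then show False using r(2) r2 unfolding L_def by simp
  qed
  then obtain r0 where r0: "0 < r0" "r0 < \<rho>"
    and I0: "(\<integral>\<^sup>+x. \<phi> (ennreal (1/r0) * recip h x) \<partial>lebesgue) \<le> 1"
    using lux_less unfolding L_def by blast
  have mono: "mono \<phi>" using y by (simp add: young_function_def)
  have phim[measurable]: "\<phi> \<in> borel_measurable borel" by (rule mono_ennreal_borel[OF mono])
  note [measurable] = um hm
  define v where "v z = e2ennreal (u z)" for z
  define eps where "eps n = inverse (real (Suc n))" for n
  define w where "w n z = ennreal (1/\<rho>) * inverse (2 * v z + ennreal (eps n))" for n z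
  have wm: "(\<lambda>z. \<phi> (w n z)) \<in> borel_measurable lebesgue" for n
    unfolding w_def v_def by measurable
  have hrm: "(\<lambda>x. \<phi> (ennreal (1/r0) * recip h x)) \<in> borel_measurable lebesgue"
    unfolding recip_def by measurable
  have bound: "(\<integral>\<^sup>+z. \<phi> (w n z) \<partial>lebesgue) \<le> 1" for n
  proof -
    have "0 < eps n" by (simp add: eps_def)
    then obtain y where yh: "\<And>z. h (z + y) \<le> 2 * u z + ereal (eps n)" using appr by blast
    have pt: "w n z \<le> ennreal (1/r0) * recip h (z + y)" for z
    proof -
      have "2 * u z + ereal (eps n) = enn2ereal (2 * v z + ennreal (eps n))"
        using u0[of z] by (simp add: v_def plus_ennreal.rep_eq times_ennreal.rep_eq enn2ereal_e2ennreal eps_def)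
      then have "e2ennreal (h (z + y)) \<le> 2 * v z + ennreal (eps n)"
        using e2ennreal_mono[OF yh[of z]] by simp
      then have "inverse (2 * v z + ennreal (eps n)) \<le> recip h (z + y)"
        unfolding recip_def by (rule ennreal_inverse_antimono)
      moreover have "ennreal (1/\<rho>) \<le> ennreal (1/r0)" using r0 by (intro ennreal_leI frac_le) auto
      ultimately show ?thesis unfolding w_def by (intro mult_mono) auto
    qed
    have "(\<integral>\<^sup>+z. \<phi> (w n z) \<partial>lebesgue) \<le> (\<integral>\<^sup>+z. \<phi> (ennreal (1/r0) * recip h (z + y)) \<partial>lebesgue)"
      by (rule nn_integral_mono) (use pt mono in \<open>auto simp: mono_def\<close>)
    also have "\<dots> = (\<integral>\<^sup>+x. \<phi> (ennreal (1/r0) * recip h x) \<partial>lebesgue)"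
      by (rule lebesgue_translate_nn[OF hrm])
    finally show ?thesis using I0 by simp
  qed
  have winc: "incseq (\<lambda>n. w n z)" for z
    unfolding w_def eps_def
    by (rule incseq_SucI, rule mult_left_mono, rule ennreal_inverse_antimono, rule add_left_mono, rule ennreal_leI)
       (simp_all add: field_simps)
  have Wsup: "ennreal (1/r) * recip u z = (SUP n. w n z)" for z
  proof -
    have "ennreal (1/r) * recip u z = ennreal (1/\<rho>) * inverse (2 * v z)"
    proof -
      have "inverse (2 * v z) = inverse 2 * inverse (v z)"
        by (rule ennreal_inverse_mult') (auto)
      moreover have "ennreal (1/r) = ennreal (1/\<rho>) * inverse 2"
      proof -
        have e: "ennreal (2/r * (1/2)) = ennreal (2/r) * ennreal (1/2)" by (rule ennreal_mult) (use r in auto)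
        then show ?thesis by (simp add: \<rho>_def)
      qed
      ultimately show ?thesis by (simp add: recip_def v_def mult.assoc)
    qed
    also have "\<dots> = ennreal (1/\<rho>) * (SUP n. inverse (2 * v z + ennreal (eps n)))"
      unfolding eps_def by (subst inverse_SUP_eps) simp
    also have "\<dots> = (SUP n. w n z)" unfolding w_def by (simp add: SUP_mult_left_ennreal)
    finally show ?thesis .
  qed
  have "(\<integral>\<^sup>+x. \<phi> (ennreal (1/r) * recip u x) \<partial>lebesgue) = (\<integral>\<^sup>+x. (SUP n. \<phi> (w n x)) \<partial>lebesgue)"
    by (rule nn_integral_cong) (simp add: Wsup young_sup[OF y winc])
  also have "\<dots> = (SUP n. \<integral>\<^sup>+x. \<phi> (w n x) \<partial>lebesgue)"
  proof (rule nn_integral_monotone_convergence_SUP)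
    show "incseq (\<lambda>n x. \<phi> (w n x))"
      using winc mono by (auto simp: incseq_def le_fun_def mono_def)
  qed (use wm in auto)
  also have "\<dots> \<le> 1" by (rule SUP_least) (rule bound)
  finally show "(\<integral>\<^sup>+x. \<phi> (ennreal (1/r) * recip u x) \<partial>lebesgue) \<le> 1" .
qed


lemma borel_to_lebesgue:
  fixes f :: "'a::euclidean_space \<Rightarrow> 'b::topological_space"
  assumes "f \<in> borel_measurable borel"
  shows "f \<in> borel_measurable lebesgue"
proof -
  have "measurable lborel (borel::'b measure) = measurable borel borel"
    by (rule measurable_cong_sets) auto
  then have "f \<in> borel_measurable lborel" using assms by simp
  then show ?thesis by (rule measurable_completion)
qed

lemma inf_conv_meas:
  fixes f g :: "'a::euclidean_space \<Rightarrow> ereal"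
  assumes [measurable]: "f \<in> borel_measurable borel" "g \<in> borel_measurable borel"
  shows "inf_conv f g \<in> borel_measurable lebesgue"
proof (rule borel_measurableI_less)
  fix a :: ereal
  define E where "E = {p::'a \<times> 'a. f (fst p - snd p) + g (snd p) < a}"
  have d: "(\<lambda>p::'a \<times> 'a. fst p - snd p) \<in> borel_measurable borel"
    by (rule borel_measurable_continuous_onI) (intro continuous_intros)
  have s: "(\<lambda>p::'a \<times> 'a. snd p) \<in> borel_measurable borel"
    by (rule borel_measurable_continuous_onI) (intro continuous_intros)
  have [measurable]: "(\<lambda>p::'a \<times> 'a. f (fst p - snd p)) \<in> borel_measurable borel"
    using measurable_compose[OF d assms(1)] by (simp add: o_def)
  have [measurable]: "(\<lambda>p::'a \<times> 'a. g (snd p)) \<in> borel_measurable borel"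
    using measurable_compose[OF s assms(2)] by (simp add: o_def)
  have "(\<lambda>p::'a \<times> 'a. f (fst p - snd p) + g (snd p)) \<in> borel_measurable borel"
    by measurable
  then have "E \<in> sets borel" unfolding E_def by measurable
  then have "fst ` E \<in> sets lebesgue" by (intro proj_SusC_lebesgue borel_SusC)
  moreover have "{x \<in> space lebesgue. inf_conv f g x < a} = fst ` E"
  proof -
    have "x \<in> fst ` E \<longleftrightarrow> inf_conv f g x < a" for x
    proof -
      have "x \<in> fst ` E \<longleftrightarrow> (\<exists>y. (x, y) \<in> E)" by force
      also have "\<dots> \<longleftrightarrow> (\<exists>y. f (x - y) + g y < a)" by (simp add: E_def)
      also have "\<dots> \<longleftrightarrow> inf_conv f g x < a" by (simp add: inf_conv_def INF_less_iff)
      finally show ?thesis .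
    qed
    then show ?thesis by auto
  qed
  ultimately show "{x \<in> space lebesgue. inf_conv f g x < a} \<in> sets lebesgue" by simp
qed

lemma ereal_aux:
  fixes F G :: ereal
  assumes "ereal c \<le> F" "G \<le> ereal (c + e)" "G \<noteq> -\<infinity>"
  shows "F + G \<le> 2 * F + ereal e"
  using assms by (cases F; cases G) auto

theorem theorem7:
  fixes f g :: "'a::euclidean_space \<Rightarrow> ereal" and mf mg :: real
  assumes f_meas: "f \<in> borel_measurable borel" and g_meas: "g \<in> borel_measurable borel"
    and f_nm: "\<And>x. f x \<noteq> -\<infinity>" and g_nm: "\<And>x. g x \<noteq> -\<infinity>"
    and mf: "(INF x. f x) = ereal mf" and mg: "(INF x. g x) = ereal mg"
    and sum_nonneg: "mf + mg \<ge> 0"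
  defines "mfg \<equiv> (mf - mg) / 2"
  shows "(\<lambda>x. f x - ereal mfg) \<in> borel_measurable lebesgue \<and> (\<forall>x. f x - ereal mfg \<ge> 0)
       \<and> (\<lambda>x. g x + ereal mfg) \<in> borel_measurable lebesgue \<and> (\<forall>x. g x + ereal mfg \<ge> 0)
       \<and> inf_conv f g \<in> borel_measurable lebesgue \<and> (\<forall>x. inf_conv f g x \<ge> 0)
       \<and> (\<forall>\<phi>. young_function \<phi> \<longrightarrow>
            luxemburg_norm \<phi> (recip (\<lambda>x. f x - ereal mfg)) + luxemburg_norm \<phi> (recip (\<lambda>x. g x + ereal mfg))
              \<le> 4 * luxemburg_norm \<phi> (recip (inf_conv f g)))"
proof -
  define c where "c = (mf + mg) / 2"
  have c0: "0 \<le> c" using sum_nonneg by (simp add: c_def)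
  define F where "F x = f x - ereal mfg" for x
  define G where "G x = g x + ereal mfg" for x
  define h where "h = inf_conv f g"
  have fge: "ereal mf \<le> f x" for x using mf[symmetric] by (metis INF_lower UNIV_I)
  have gge: "ereal mg \<le> g x" for x using mg[symmetric] by (metis INF_lower UNIV_I)
  have Fc: "ereal c \<le> F x" for x
  proof (cases "f x")
    case (real r)
    then have "mf \<le> r" using fge[of x] by simp
    then have "c \<le> r - mfg" unfolding c_def mfg_def by (simp add: field_simps)
    then show ?thesis using real by (simp add: F_def)
  qed (use f_nm[of x] in \<open>auto simp: F_def\<close>)
  have Gc: "ereal c \<le> G x" for x
  proof (cases "g x")
    case (real r)
    then have "mg \<le> r" using gge[of x] by simp
    then have "c \<le> r + mfg" unfolding c_def mfg_def by (simp add: field_simps)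
    then show ?thesis using real by (simp add: G_def)
  qed (use g_nm[of x] in \<open>auto simp: G_def\<close>)
  have Fnm: "F x \<noteq> -\<infinity>" for x using f_nm[of x] by (cases "f x") (auto simp: F_def)
  have Gnm: "G x \<noteq> -\<infinity>" for x using g_nm[of x] by (cases "g x") (auto simp: G_def)
  have FG: "f a + g b = F a + G b" for a b
    using f_nm[of a] g_nm[of b] by (cases "f a"; cases "g b") (auto simp: F_def G_def)
  have F0: "0 \<le> F x" for x using Fc[of x] c0 by (metis ereal_less_eq(5) order_trans zero_ereal_def)
  have G0: "0 \<le> G x" for x using Gc[of x] c0 by (metis ereal_less_eq(5) order_trans zero_ereal_def)
  have Fm: "F \<in> borel_measurable lebesgue" unfolding F_def
    by (rule borel_to_lebesgue) (use f_meas in measurable)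
  have Gm: "G \<in> borel_measurable lebesgue" unfolding G_def
    by (rule borel_to_lebesgue) (use g_meas in measurable)
  have hm: "h \<in> borel_measurable lebesgue" unfolding h_def by (rule inf_conv_meas[OF f_meas g_meas])
  have h0: "0 \<le> h x" for x
  proof -
    have "0 \<le> f (x - y) + g y" for y
    proof -
      have "(0::ereal) \<le> ereal mf + ereal mg" using sum_nonneg by simp
      also have "\<dots> \<le> f (x - y) + g y" by (intro add_mono fge gge)
      finally show ?thesis .
    qed
    then show ?thesis unfolding h_def inf_conv_def by (auto intro: INF_greatest)
  qed
  have hle: "h x \<le> f (x - y) + g y" for x y unfolding h_def inf_conv_def by (rule INF_lower) simp
  have ineq: "luxemburg_norm \<phi> (recip F) + luxemburg_norm \<phi> (recip G) \<le> 4 * luxemburg_norm \<phi> (recip h)"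
    if y: "young_function \<phi>" for \<phi>
  proof -
    have 1: "luxemburg_norm \<phi> (recip F) \<le> 2 * luxemburg_norm \<phi> (recip h)"
    proof (rule key_ineq[OF y Fm F0 hm])
      fix e :: real assume e: "0 < e"
      have "(INF x. g x) < ereal (mg + e)" using mg e by simp
      then obtain y where gy: "g y < ereal (mg + e)" by (auto simp: INF_less_iff)
      have Gy: "G y \<le> ereal (c + e)"
      proof (cases "g y")
        case (real r)
        then have "r < mg + e" using gy by simp
        then have "r + mfg \<le> c + e" unfolding c_def mfg_def by (simp add: field_simps)
        then show ?thesis using real by (simp add: G_def)
      qed (use gy g_nm[of y] in auto)
      have "h (z + y) \<le> 2 * F z + ereal e" for z
      proof -
        have "h (z + y) \<le> f z + g y" using hle[of "z + y" y] by simp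
        also have "\<dots> = F z + G y" by (rule FG)
        also have "\<dots> \<le> 2 * F z + ereal e" by (rule ereal_aux[OF Fc Gy Gnm])
        finally show ?thesis .
      qed
      then show "\<exists>y. \<forall>z. h (z + y) \<le> 2 * F z + ereal e" by blast
    qed
    have 2: "luxemburg_norm \<phi> (recip G) \<le> 2 * luxemburg_norm \<phi> (recip h)"
    proof (rule key_ineq[OF y Gm G0 hm])
      fix e :: real assume e: "0 < e"
      have "(INF x. f x) < ereal (mf + e)" using mf e by simp
      then obtain y where fy: "f y < ereal (mf + e)" by (auto simp: INF_less_iff)
      have Fy: "F y \<le> ereal (c + e)"
      proof (cases "f y")
        case (real r)
        then have "r < mf + e" using fy by simp
        then have "r - mfg \<le> c + e" unfolding c_def mfg_def by (simp add: field_simps)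
        then show ?thesis using real by (simp add: F_def)
      qed (use fy f_nm[of y] in auto)
      have "h (z + y) \<le> 2 * G z + ereal e" for z
      proof -
        have "h (z + y) \<le> f y + g z" using hle[of "z + y" z] by simp
        also have "\<dots> = F y + G z" by (rule FG)
        also have "\<dots> = G z + F y" by (simp add: add.commute)
        also have "\<dots> \<le> 2 * G z + ereal e" by (rule ereal_aux[OF Gc Fy Fnm])
        finally show ?thesis .
      qed
      then show "\<exists>y. \<forall>z. h (z + y) \<le> 2 * G z + ereal e" by blast
    qed
    have "luxemburg_norm \<phi> (recip F) + luxemburg_norm \<phi> (recip G)
        \<le> 2 * luxemburg_norm \<phi> (recip h) + 2 * luxemburg_norm \<phi> (recip h)"
      using 1 2 by (rule add_mono)
    also have "\<dots> = 4 * luxemburg_norm \<phi> (recip h)"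
      by (simp add: distrib_right[symmetric])
    finally show ?thesis .
  qed
  have eqF: "(\<lambda>x. f x - ereal mfg) = F" by (simp add: F_def fun_eq_iff)
  have eqG: "(\<lambda>x. g x + ereal mfg) = G" by (simp add: G_def fun_eq_iff)
  show ?thesis unfolding eqF eqG h_def[symmetric]
    using Fm F0 Gm G0 hm h0 ineq unfolding F_def G_def by blast
qed


end
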